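(* Let $0<\delta<\frac12$. Let $g\in\mathrm{Diff}_0^3(I)$ and $f\in\mathrm{Diff}_+^{1,\delta}(I)$ be such that $p_\delta(g\circ f)\le C$ for some $C>0$, and let $m$ be the minimum of $f'$ on $I$. Then $\psi=\log(g')$ satisfies $|\psi(t)-\psi(s)|\le \frac{C+p_\delta(f)}{m^\delta}|t-s|^\delta$ for all $s,t\in I$.
   Context: $I=[0,1]$. $\mathrm{Diff}_+^1(I)$ is the set of $C^1$ diffeomorphisms of $I$ fixing $0$ and $1$; $\mathrm{Diff}_+^{1,\delta}(I)$ is the set of $f\in\mathrm{Diff}_+^1(I)$ with $f'$ Hölder of exponent $\delta$. $\mathrm{Diff}_0^3(I)$ is the set of $C^3$ diffeomorphisms $f$ of $I$ fixing $0$ and $1$ with $f'(0)=f'(1)=1$. For $f\in\mathrm{Diff}_+^{1,\delta}(I)$, $p_\delta(f)=|\log(f'(0))|+\sup_{t_1\ne t_2\in I}\frac{|\log(f'(t_2))-\log(f'(t_1))|}{|t_2-t_1|^\delta}$ (a finite number). *)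

theory Defs
  imports "HOL-Analysis.Analysis"
begin

abbreviation I01 :: "real set" where "I01 \<equiv> {0..1}"

definition D :: "(real \<Rightarrow> real) \<Rightarrow> real \<Rightarrow> real" where
  "D f x = vector_derivative f (at x within I01)"

fun Dn :: "nat \<Rightarrow> (real \<Rightarrow> real) \<Rightarrow> real \<Rightarrow> real" where
  "Dn 0 f = f"
| "Dn (Suc n) f = D (Dn n f)"

definition Ck_on_I :: "nat \<Rightarrow> (real \<Rightarrow> real) \<Rightarrow> bool" where
  "Ck_on_I k f \<longleftrightarrow>
     (\<forall>j<k. \<forall>x\<in>I01. Dn j f differentiable (at x within I01))
     \<and> continuous_on I01 (Dn k f)"

definition Diff_k :: "nat \<Rightarrow> (real \<Rightarrow> real) \<Rightarrow> bool" where
  "Diff_k k f \<longleftrightarrow> bij_betw f I01 I01 \<and> f 0 = 0 \<and> f 1 = 1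
     \<and> Ck_on_I k f \<and> Ck_on_I k (inv_into I01 f)"

definition Diff1 :: "(real \<Rightarrow> real) \<Rightarrow> bool" where
  "Diff1 f \<longleftrightarrow> Diff_k 1 f"

definition Diff1_delta :: "real \<Rightarrow> (real \<Rightarrow> real) \<Rightarrow> bool" where
  "Diff1_delta \<delta> f \<longleftrightarrow> Diff1 f \<and>
     (\<exists>K. \<forall>s\<in>I01. \<forall>t\<in>I01. \<bar>D f t - D f s\<bar> \<le> K * \<bar>t - s\<bar> powr \<delta>)"

definition Diff0_3 :: "(real \<Rightarrow> real) \<Rightarrow> bool" where
  "Diff0_3 f \<longleftrightarrow> Diff_k 3 f \<and> D f 0 = 1 \<and> D f 1 = 1"

definition p_delta :: "real \<Rightarrow> (real \<Rightarrow> real) \<Rightarrow> real" where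
  "p_delta \<delta> f = \<bar>ln (D f 0)\<bar> +
     Sup {\<bar>ln (D f t2) - ln (D f t1)\<bar> / \<bar>t2 - t1\<bar> powr \<delta> | t1 t2.
            t1 \<in> I01 \<and> t2 \<in> I01 \<and> t1 \<noteq> t2}"

end

theory Submission
  imports Defs
begin

lemma nbot: "x \<in> I01 \<Longrightarrow> at x within I01 \<noteq> bot"
  using trivial_limit_within[of x I01] islimpt_Icc[of 0 1 x] by auto

lemma Dhas: assumes "x \<in> I01" "f differentiable (at x within I01)"
  shows "(f has_real_derivative D f x) (at x within I01)"
  using assms vector_derivative_works[of f "at x within I01"]
  by (simp add: D_def has_real_derivative_iff_has_vector_derivative)

lemma Dunique: assumes "x \<in> I01" "(f has_real_derivative d) (at x within I01)"
  shows "D f x = d"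
  using vector_derivative_within[OF nbot[OF assms(1)]] assms(2)
  by (simp add: D_def has_real_derivative_iff_has_vector_derivative)

lemma Ck1: assumes "Ck_on_I k f" "k \<ge> 1"
  shows "\<forall>x\<in>I01. (f has_real_derivative D f x) (at x within I01)"
    "continuous_on I01 (D f)" "continuous_on I01 f"
proof -
  have d: "\<forall>x\<in>I01. f differentiable (at x within I01)"
    using assms unfolding Ck_on_I_def by (metis Dn.simps(1) less_le_trans zero_less_one)
  thus "\<forall>x\<in>I01. (f has_real_derivative D f x) (at x within I01)" using Dhas by blast
  show "continuous_on I01 f" using d
    by (meson continuous_on_eq_continuous_within differentiable_imp_continuous_within)
  show "continuous_on I01 (D f)"
  proof (cases "k = 1")
    case True thus ?thesis using assms unfolding Ck_on_I_def by simp
  next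
    case False
    hence "1 < k" using assms by auto
    hence "\<forall>x\<in>I01. Dn 1 f differentiable (at x within I01)" using assms unfolding Ck_on_I_def by blast
    thus ?thesis
      by (simp add: continuous_on_eq_continuous_within differentiable_imp_continuous_within)
  qed
qed

lemma Dpos: assumes "Diff_k k f" "k \<ge> 1"
  shows "\<forall>x\<in>I01. D f x > 0"
proof -
  let ?h = "inv_into I01 f"
  have bij: "bij_betw f I01 I01" and f0: "f 0 = 0" and f1: "f 1 = 1"
    and ck: "Ck_on_I k f" and ckh: "Ck_on_I k ?h" using assms(1) unfolding Diff_k_def by auto
  have img: "f ` I01 = I01" using bij by (simp add: bij_betw_def)
  have inj: "inj_on f I01" using bij by (simp add: bij_betw_def)
  note fd = Ck1[OF ck assms(2)]
  note hd = Ck1[OF ckh assms(2)]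
  have nz: "D f x \<noteq> 0" if x: "x \<in> I01" for x
  proof -
    have fx: "f x \<in> I01" using img x by auto
    have a: "(f has_vector_derivative D f x) (at x within I01)"
      using fd(1) x has_real_derivative_iff_has_vector_derivative by blast
    have b: "(?h has_vector_derivative D ?h (f x)) (at (f x) within f ` I01)"
      using hd(1) fx img has_real_derivative_iff_has_vector_derivative by metis
    have c: "((?h \<circ> f) has_vector_derivative (D f x *\<^sub>R D ?h (f x))) (at x within I01)"
      by (rule vector_diff_chain_within[OF a b])
    have e: "((\<lambda>y. y) has_vector_derivative (D f x *\<^sub>R D ?h (f x))) (at x within I01)"
      by (rule has_vector_derivative_transform_within[OF c zero_less_one x])
         (simp add: inv_into_f_f[OF inj])
    have "D (\<lambda>y. y) x = D f x * D ?h (f x)"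
      using Dunique[OF x] e has_real_derivative_iff_has_vector_derivative by auto
    moreover have "D (\<lambda>y. y) x = 1"
      using Dunique[OF x, of "\<lambda>y. y" 1] by (simp add: DERIV_ident has_field_derivative_at_within)
    ultimately show ?thesis by auto
  qed
  have "\<exists>l z. 0 < z \<and> z < 1 \<and> DERIV f z :> l \<and> f 1 - f 0 = (1 - 0) * l"
  proof (rule MVT[of 0 1 f])
    show "continuous_on {0..1} f" using fd(3) .
    fix x :: real assume "0 < x" "x < 1"
    hence h1: "(f has_real_derivative D f x) (at x within I01)" using fd(1) by auto
    have "at x within I01 = at x" using at_within_Icc_at[of 0 x 1] \<open>0 < x\<close> \<open>x < 1\<close> by auto
    hence "(f has_real_derivative D f x) (at x)" using h1 by metis
    thus "f differentiable (at x)" using real_differentiable_def by blast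
  qed simp
  then obtain l z where z: "0 < z" "z < 1" "DERIV f z :> l" "f 1 - f 0 = (1 - 0) * l" by blast
  have "D f z = l" using Dunique[of z f l] z has_field_derivative_at_within by auto
  hence Dz: "D f z > 0" using z f0 f1 by simp
  show ?thesis
  proof (rule ccontr)
    assume "\<not> ?thesis"
    then obtain x where x: "x \<in> I01" "D f x \<le> 0" by auto
    show False
    proof (cases "x \<le> z")
      case True
      have "continuous_on {x..z} (D f)" using fd(2) by (rule continuous_on_subset) (use x z in auto)
      then obtain w where "x \<le> w" "w \<le> z" "D f w = 0" using IVT'[of "D f" x 0 z] x Dz True by auto
      thus False using nz[of w] x z by auto
    next
      case False
      have "continuous_on {z..x} (D f)" using fd(2) by (rule continuous_on_subset) (use x z in auto)
      then obtain w where "z \<le> w" "w \<le> x" "D f w = 0" using IVT2'[of "D f" x 0 z] x Dz False by auto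
      thus False using nz[of w] x z by auto
    qed
  qed
qed

lemma cbound: fixes F :: "real \<Rightarrow> real" assumes "continuous_on I01 F" shows "\<exists>B. \<forall>x\<in>I01. \<bar>F x\<bar> \<le> B"
proof -
  have "compact (F ` I01)" using compact_continuous_image[OF assms] by auto
  then obtain B where "\<forall>y\<in>F ` I01. norm y \<le> B" using compact_imp_bounded bounded_iff by metis
  thus ?thesis by auto
qed

lemma lipsch: assumes "\<forall>x\<in>I01. (f has_real_derivative D f x) (at x within I01)" "continuous_on I01 (D f)"
  shows "\<exists>M\<ge>0. \<forall>x\<in>I01. \<forall>y\<in>I01. \<bar>f y - f x\<bar> \<le> M * \<bar>y - x\<bar>"
proof -
  obtain B where B: "\<forall>x\<in>I01. \<bar>D f x\<bar> \<le> B" using cbound[OF assms(2)] by blast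
  have "\<bar>f y - f x\<bar> \<le> B * \<bar>y - x\<bar>" if "x \<in> I01" "y \<in> I01" for x y
    using field_differentiable_bound[of I01 f "D f" B y x] assms(1) B that by auto
  moreover have "B \<ge> 0" using B by (metis abs_ge_zero atLeastAtMost_iff order_trans zero_le_one order_refl)
  ultimately show ?thesis by blast
qed

lemma ln_lip: fixes a b m :: real assumes "0 < m" "m \<le> a" "m \<le> b"
  shows "\<bar>ln a - ln b\<bar> \<le> \<bar>a - b\<bar> / m"
proof -
  have k: "\<bar>ln u - ln v\<bar> \<le> \<bar>u - v\<bar> / m" if "m \<le> u" "m \<le> v" "v \<le> u" for u v
  proof -
    have "ln u - ln v = ln (u / v)" using that assms(1) by (simp add: ln_div)
    also have "\<dots> \<le> u / v - 1" using that assms(1) by (intro ln_le_minus_one) auto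
    also have "\<dots> = (u - v) / v" using that assms(1) by (simp add: field_simps)
    also have "\<dots> \<le> (u - v) / m" using that assms(1) by (intro divide_left_mono) auto
    finally have "ln u - ln v \<le> (u - v) / m" .
    moreover have "ln v \<le> ln u" using that assms by simp
    ultimately show ?thesis using that by simp
  qed
  show ?thesis
  proof (cases "b \<le> a")
    case True thus ?thesis using k[of a b] assms by simp
  next
    case False thus ?thesis using k[of b a] assms by (simp add: abs_minus_commute)
  qed
qed
lemma holder_bdd: assumes "\<forall>s\<in>I01. \<forall>t\<in>I01. \<bar>\<phi> t - \<phi> s\<bar> \<le> K * \<bar>t - s\<bar> powr \<delta>"
  shows "bdd_above {\<bar>\<phi> t2 - \<phi> t1\<bar> / \<bar>t2 - t1\<bar> powr \<delta> | t1 t2.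
            t1 \<in> I01 \<and> t2 \<in> I01 \<and> t1 \<noteq> t2}"
proof (rule bdd_aboveI[of _ K], clarify)
  fix t1 t2 :: real assume "t1 \<in> I01" "t2 \<in> I01" "t1 \<noteq> t2"
  moreover hence "\<bar>t2 - t1\<bar> powr \<delta> > 0" by simp
  ultimately show "\<bar>\<phi> t2 - \<phi> t1\<bar> / \<bar>t2 - t1\<bar> powr \<delta> \<le> K"
    using assms by (simp add: divide_le_eq)
qed

lemma sup_ge: assumes "bdd_above {\<bar>\<phi> t2 - \<phi> t1\<bar> / \<bar>t2 - t1\<bar> powr \<delta> | t1 t2.
            t1 \<in> I01 \<and> t2 \<in> I01 \<and> t1 \<noteq> t2}" (is "bdd_above ?S")
    and "s \<in> I01" "t \<in> I01"
  shows "\<bar>\<phi> t - \<phi> s\<bar> \<le> Sup ?S * \<bar>t - s\<bar> powr \<delta>" "Sup ?S \<ge> 0"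
proof -
  have "(0::real) \<in> I01" "(1::real) \<in> I01" "(0::real) \<noteq> 1" by auto
  hence "\<bar>\<phi> 1 - \<phi> 0\<bar> / \<bar>1 - 0\<bar> powr \<delta> \<in> ?S" by blast
  hence "0 \<le> Sup ?S" using cSup_upper[OF _ assms(1)] by (meson abs_ge_zero divide_nonneg_nonneg order_trans powr_ge_zero)
  thus "Sup ?S \<ge> 0" .
  show "\<bar>\<phi> t - \<phi> s\<bar> \<le> Sup ?S * \<bar>t - s\<bar> powr \<delta>"
  proof (cases "s = t")
    case True thus ?thesis by simp
  next
    case False
    hence "\<bar>\<phi> t - \<phi> s\<bar> / \<bar>t - s\<bar> powr \<delta> \<in> ?S" using assms by blast
    hence "\<bar>\<phi> t - \<phi> s\<bar> / \<bar>t - s\<bar> powr \<delta> \<le> Sup ?S" using cSup_upper[OF _ assms(1)] by blast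
    moreover have "\<bar>t - s\<bar> powr \<delta> > 0" using False by simp
    ultimately show ?thesis by (simp add: divide_le_eq)
  qed
qed

lemma inf_pos: assumes "Diff_k k f" "k \<ge> 1"
  shows "Inf (D f ` I01) > 0" "\<forall>x\<in>I01. Inf (D f ` I01) \<le> D f x"
proof -
  have ck: "Ck_on_I k f" using assms(1) unfolding Diff_k_def by auto
  note fd = Ck1[OF ck assms(2)]
  have cpt: "compact (D f ` I01)" using compact_continuous_image[OF fd(2)] by auto
  have bb: "bdd_below (D f ` I01)" by (rule bounded_imp_bdd_below[OF compact_imp_bounded[OF cpt]])
  have "Inf (D f ` I01) \<in> D f ` I01"
    using closed_contains_Inf[OF _ bb] cpt compact_imp_closed by auto
  thus "Inf (D f ` I01) > 0" using Dpos[OF assms] by auto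
  show "\<forall>x\<in>I01. Inf (D f ` I01) \<le> D f x" using cInf_lower[OF _ bb] by auto
qed

lemma lower: assumes "Diff_k k f" "k \<ge> 1" "x \<in> I01" "y \<in> I01" "x < y"
  shows "Inf (D f ` I01) * (y - x) \<le> f y - f x"
proof -
  have ck: "Ck_on_I k f" using assms(1) unfolding Diff_k_def by auto
  note fd = Ck1[OF ck assms(2)]
  have "\<exists>l z. x < z \<and> z < y \<and> DERIV f z :> l \<and> f y - f x = (y - x) * l"
  proof (rule MVT[of x y f])
    show "continuous_on {x..y} f" using fd(3) by (rule continuous_on_subset) (use assms in auto)
    fix z :: real assume z: "x < z" "z < y"
    hence h1: "(f has_real_derivative D f z) (at z within I01)" using fd(1) assms by auto
    have "at z within I01 = at z" using at_within_Icc_at[of 0 z 1] z assms by auto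
    hence "(f has_real_derivative D f z) (at z)" using h1 by metis
    thus "f differentiable (at z)" using real_differentiable_def by blast
  qed (use assms in simp)
  then obtain l z where z: "x < z" "z < y" "DERIV f z :> l" "f y - f x = (y - x) * l" by blast
  have zI: "z \<in> I01" using z assms by auto
  have "D f z = l" by (rule Dunique[OF zI has_field_derivative_at_within[OF z(3)]])
  hence "Inf (D f ` I01) \<le> l" using inf_pos(2)[OF assms(1,2)] zI by auto
  thus ?thesis using z assms(5) by (simp add: mult.commute mult_right_mono)
qed

theorem mainTheorem13:
  fixes \<delta> C :: real and f g :: "real \<Rightarrow> real"
  assumes "0 < \<delta>" "\<delta> < 1/2"
    and "Diff0_3 g" and "Diff1_delta \<delta> f"
    and "C > 0" and "p_delta \<delta> (g \<circ> f) \<le> C"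
  shows "\<forall>s\<in>I01. \<forall>t\<in>I01.
           \<bar>ln (D g t) - ln (D g s)\<bar>
             \<le> (C + p_delta \<delta> f) / (Inf (D f ` I01)) powr \<delta> * \<bar>t - s\<bar> powr \<delta>"
proof -
  have dg: "Diff_k 3 g" using assms(3) unfolding Diff0_3_def by auto
  have df: "Diff_k 1 f" using assms(4) unfolding Diff1_delta_def Diff1_def by auto
  obtain K where K: "\<forall>s\<in>I01. \<forall>t\<in>I01. \<bar>D f t - D f s\<bar> \<le> K * \<bar>t - s\<bar> powr \<delta>"
    using assms(4) unfolding Diff1_delta_def by auto
  have ckg: "Ck_on_I 3 g" using dg unfolding Diff_k_def by auto
  have ckf: "Ck_on_I 1 f" using df unfolding Diff_k_def by auto
  have three: "(1::nat) \<le> 3" by simp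
  note gd = Ck1[OF ckg three] and fd = Ck1[OF ckf order_refl]
  have gpos: "\<forall>x\<in>I01. D g x > 0" using Dpos[OF dg] by simp
  have fpos: "\<forall>x\<in>I01. D f x > 0" using Dpos[OF df] by simp
  define m where "m = Inf (D f ` I01)"
  define mg where "mg = Inf (D g ` I01)"
  have m: "m > 0" "\<forall>x\<in>I01. m \<le> D f x" using inf_pos[OF df] unfolding m_def by auto
  have mg: "mg > 0" "\<forall>x\<in>I01. mg \<le> D g x" using inf_pos[OF dg] unfolding mg_def by auto
  have img: "f ` I01 = I01" using df unfolding Diff_k_def bij_betw_def by auto
  have fI: "f x \<in> I01" if "x \<in> I01" for x using img that by auto
  have DF: "D (g \<circ> f) x = D f x * D g (f x)" if x: "x \<in> I01" for x
  proof -
    have a: "(f has_vector_derivative D f x) (at x within I01)"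
      using fd(1) x has_real_derivative_iff_has_vector_derivative by blast
    have b: "(g has_vector_derivative D g (f x)) (at (f x) within f ` I01)"
      using gd(1) fI[OF x] img has_real_derivative_iff_has_vector_derivative by metis
    have "((g \<circ> f) has_vector_derivative (D f x *\<^sub>R D g (f x))) (at x within I01)"
      by (rule vector_diff_chain_within[OF a b])
    thus ?thesis using Dunique[OF x] has_real_derivative_iff_has_vector_derivative by auto
  qed
  have lnDF: "ln (D (g \<circ> f) x) = ln (D f x) + ln (D g (f x))" if x: "x \<in> I01" for x
  proof -
    have "D f x > 0" "D g (f x) > 0" using fpos gpos fI[OF x] x by auto
    thus ?thesis using DF[OF x] by (simp add: ln_mult)
  qed
  have Hf: "\<bar>ln (D f t) - ln (D f s)\<bar> \<le> (K / m) * \<bar>t - s\<bar> powr \<delta>" if "s \<in> I01" "t \<in> I01" for s t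
  proof -
    have "\<bar>ln (D f t) - ln (D f s)\<bar> \<le> \<bar>D f t - D f s\<bar> / m" using ln_lip[OF m(1)] m(2) that by auto
    also have "\<dots> \<le> K * \<bar>t - s\<bar> powr \<delta> / m" using K that m(1) by (intro divide_right_mono) auto
    finally show ?thesis by simp
  qed
  have al: "\<forall>j<3. \<forall>x\<in>I01. Dn j g differentiable (at x within I01)" using ckg unfolding Ck_on_I_def by blast
  have lt: "(1::nat) < 3" "(2::nat) < 3" by auto
  have ddg: "\<forall>x\<in>I01. (D g has_real_derivative D (D g) x) (at x within I01)"
  proof -
    have "\<forall>x\<in>I01. Dn 1 g differentiable (at x within I01)" using al lt by blast
    thus ?thesis using Dhas by simp
  qed
  have cdg: "continuous_on I01 (D (D g))"
  proof -
    have "\<forall>x\<in>I01. Dn 2 g differentiable (at x within I01)" using al lt by blast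
    hence "\<forall>x\<in>I01. D (D g) differentiable (at x within I01)" by (simp add: numeral_2_eq_2)
    thus ?thesis
      by (simp add: continuous_on_eq_continuous_within differentiable_imp_continuous_within)
  qed
  obtain Mg where Mg: "Mg \<ge> 0" "\<forall>x\<in>I01. \<forall>y\<in>I01. \<bar>D g y - D g x\<bar> \<le> Mg * \<bar>y - x\<bar>"
    using lipsch[OF ddg cdg] by blast
  obtain Mf where Mf: "Mf \<ge> 0" "\<forall>x\<in>I01. \<forall>y\<in>I01. \<bar>f y - f x\<bar> \<le> Mf * \<bar>y - x\<bar>"
    using lipsch[OF fd(1,2)] by blast
  have Hg: "\<bar>ln (D g (f t)) - ln (D g (f s))\<bar> \<le> (Mg * Mf / mg) * \<bar>t - s\<bar> powr \<delta>"
    if st: "s \<in> I01" "t \<in> I01" for s t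
  proof -
    have "\<bar>ln (D g (f t)) - ln (D g (f s))\<bar> \<le> \<bar>D g (f t) - D g (f s)\<bar> / mg"
      using ln_lip[OF mg(1)] mg(2) fI st by auto
    also have "\<dots> \<le> Mg * \<bar>f t - f s\<bar> / mg" using Mg fI st mg(1) by (intro divide_right_mono) auto
    also have "\<dots> \<le> Mg * (Mf * \<bar>t - s\<bar>) / mg" using Mf Mg st mg(1)
      by (intro divide_right_mono mult_left_mono) auto
    also have "\<dots> \<le> Mg * (Mf * \<bar>t - s\<bar> powr \<delta>) / mg"
    proof -
      have "\<bar>t - s\<bar> \<le> \<bar>t - s\<bar> powr \<delta>"
      proof (cases "t = s")
        case False
        have "\<bar>t - s\<bar> powr 1 \<le> \<bar>t - s\<bar> powr \<delta>" using st assms(1,2) by (intro powr_mono') auto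
        thus ?thesis by simp
      qed simp
      thus ?thesis using Mf Mg mg(1) by (intro divide_right_mono mult_left_mono) auto
    qed
    finally show ?thesis by simp
  qed
  have HF: "\<bar>ln (D (g \<circ> f) t) - ln (D (g \<circ> f) s)\<bar> \<le> (K / m + Mg * Mf / mg) * \<bar>t - s\<bar> powr \<delta>"
    if "s \<in> I01" "t \<in> I01" for s t
    using lnDF that Hf[OF that] Hg[OF that] by (simp add: distrib_right)
  define S1 where "S1 = Sup {\<bar>ln (D (g \<circ> f) t2) - ln (D (g \<circ> f) t1)\<bar> / \<bar>t2 - t1\<bar> powr \<delta> | t1 t2.
            t1 \<in> I01 \<and> t2 \<in> I01 \<and> t1 \<noteq> t2}"
  define S2 where "S2 = Sup {\<bar>ln (D f t2) - ln (D f t1)\<bar> / \<bar>t2 - t1\<bar> powr \<delta> | t1 t2.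
            t1 \<in> I01 \<and> t2 \<in> I01 \<and> t1 \<noteq> t2}"
  have b1: "bdd_above {\<bar>ln (D (g \<circ> f) t2) - ln (D (g \<circ> f) t1)\<bar> / \<bar>t2 - t1\<bar> powr \<delta> | t1 t2.
            t1 \<in> I01 \<and> t2 \<in> I01 \<and> t1 \<noteq> t2}"
    by (rule holder_bdd) (use HF in blast)
  have b2: "bdd_above {\<bar>ln (D f t2) - ln (D f t1)\<bar> / \<bar>t2 - t1\<bar> powr \<delta> | t1 t2.
            t1 \<in> I01 \<and> t2 \<in> I01 \<and> t1 \<noteq> t2}"
    by (rule holder_bdd) (use Hf in blast)
  note s1 = sup_ge[OF b1, folded S1_def] and s2 = sup_ge[OF b2, folded S2_def]
  have S1C: "S1 \<le> C" using assms(6) unfolding p_delta_def S1_def by simp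
  have S2p: "S2 \<le> p_delta \<delta> f" unfolding p_delta_def S2_def by simp
  show ?thesis
  proof (intro ballI)
    fix s t :: real assume s: "s \<in> I01" and t: "t \<in> I01"
    define x where "x = inv_into I01 f s"
    define y where "y = inv_into I01 f t"
    have xI: "x \<in> I01" and yI: "y \<in> I01" unfolding x_def y_def using s t img
      by (metis inv_into_into)+
    have fx: "f x = s" and fy: "f y = t" unfolding x_def y_def using s t img
      by (metis f_inv_into_f)+
    have "ln (D g t) - ln (D g s) = (ln (D (g \<circ> f) y) - ln (D (g \<circ> f) x)) - (ln (D f y) - ln (D f x))"
      using lnDF[OF xI] lnDF[OF yI] fx fy by simp
    hence "\<bar>ln (D g t) - ln (D g s)\<bar> \<le> S1 * \<bar>y - x\<bar> powr \<delta> + S2 * \<bar>y - x\<bar> powr \<delta>"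
      using s1(1)[OF xI yI] s2(1)[OF xI yI] by linarith
    also have "\<dots> = (S1 + S2) * \<bar>y - x\<bar> powr \<delta>" by (simp add: distrib_right)
    also have "\<dots> \<le> (S1 + S2) * (\<bar>t - s\<bar> / m) powr \<delta>"
    proof -
      have "m * \<bar>y - x\<bar> \<le> \<bar>t - s\<bar>"
      proof (cases "x < y")
        case True thus ?thesis using lower[OF df _ xI yI] fx fy unfolding m_def by auto
      next
        case False
        show ?thesis
        proof (cases "x = y")
          case False
          hence "y < x" using \<open>\<not> x < y\<close> by auto
          thus ?thesis using lower[OF df _ yI xI] fx fy unfolding m_def by auto
        qed simp
      qed
      hence "\<bar>y - x\<bar> \<le> \<bar>t - s\<bar> / m" using m(1) by (simp add: field_simps)
      hence "\<bar>y - x\<bar> powr \<delta> \<le> (\<bar>t - s\<bar> / m) powr \<delta>" using assms(1) by (intro powr_mono2) auto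
      thus ?thesis using s1(2)[OF xI yI] s2(2)[OF xI yI] by (intro mult_left_mono) auto
    qed
    also have "\<dots> = (S1 + S2) / m powr \<delta> * \<bar>t - s\<bar> powr \<delta>" by (simp add: powr_divide)
    also have "\<dots> \<le> (C + p_delta \<delta> f) / m powr \<delta> * \<bar>t - s\<bar> powr \<delta>"
      using S1C S2p m(1) by (intro mult_right_mono divide_right_mono) auto
    finally show "\<bar>ln (D g t) - ln (D g s)\<bar>
             \<le> (C + p_delta \<delta> f) / (Inf (D f ` I01)) powr \<delta> * \<bar>t - s\<bar> powr \<delta>"
      unfolding m_def .
  qed
qed

end
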